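(* Let $R_1,\dots,R_k$ be norms on $\mathbb{R}^p$, $\theta_1^*,\dots,\theta_k^*\in\mathbb{R}^p$, and $\mathcal{C}_i=\operatorname{cone}\{\Delta: R_i(\theta_i^*+\Delta)\le R_i(\theta_i^* )\}$. Let $$\mathcal{H}=\Big\{\sum_{i=1}^k\Delta_i:\Delta_i\in\mathcal{C}_i,\ \sum_{i=1}^k\|\Delta_i\|_2=1\Big\},\qquad \mathcal{A}=\Big(\sum_{i=1}^k\mathcal{C}_i\Big)\cap S^{p-1}.$$ Suppose the structural coherence condition holds with constant $\rho>0$, i.e. $\|\sum_{i=1}^k\Delta_i\|_2\ge\rho\sum_{i=1}^k\|\Delta_i\|_2$ for all $\Delta_i\in\mathcal{C}_i$. Then for every random vector $Z\in\mathbb{R}^p$ and every $\xi>0$, $$Q_{\rho\xi}(\mathcal{H};Z)\ \ge\ Q_\xi(\mathcal{A};Z).$$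
   Context: $\operatorname{cone}(E)$ is the smallest closed cone containing $E$; $S^{p-1}$ is the Euclidean unit sphere. For a set $E\subseteq\mathbb{R}^p$ and random vector $Z$, the marginal tail function is $Q_\xi(E;Z)=\inf_{u\in E}P(|\langle Z,u\rangle|\ge\xi)$. *)

theory Defs
  imports "HOL-Analysis.Analysis" "HOL-Probability.Probability"
begin

definition is_norm :: "('a::real_vector \<Rightarrow> real) \<Rightarrow> bool" where
  "is_norm R \<longleftrightarrow> (\<forall>x. 0 \<le> R x) \<and> (\<forall>x. R x = 0 \<longleftrightarrow> x = 0)
     \<and> (\<forall>x y. R (x + y) \<le> R x + R y) \<and> (\<forall>c x. R (c *\<^sub>R x) = \<bar>c\<bar> * R x)"

definition closed_cone_of :: "'a::real_normed_vector set \<Rightarrow> 'a set" where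
  "closed_cone_of E = \<Inter>{C. cone C \<and> closed C \<and> E \<subseteq> C}"

text \<open>Marginal tail function; infimum taken in the extended reals (empty infimum = top).\<close>
definition marginal_tail ::
  "real \<Rightarrow> 'a::euclidean_space set \<Rightarrow> 'w measure \<Rightarrow> ('w \<Rightarrow> 'a) \<Rightarrow> ereal" where
  "marginal_tail \<xi> E M Z = (INF u\<in>E. ereal (measure M {\<omega> \<in> space M. \<xi> \<le> \<bar>Z \<omega> \<bullet> u\<bar>}))"

end

theory Submission
  imports Defs
begin

lemma cone_closed_cone_of:
  assumes "x \<in> closed_cone_of E" "c \<ge> 0"
  shows "c *\<^sub>R x \<in> closed_cone_of E"
  using assms unfolding closed_cone_of_def cone_def by blast

theorem lemma2:
  fixes k :: nat
    and R :: "nat \<Rightarrow> 'a::euclidean_space \<Rightarrow> real"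
    and \<theta> :: "nat \<Rightarrow> 'a"
    and C :: "nat \<Rightarrow> 'a set"
    and H A :: "'a set"
    and \<rho> :: real
  assumes norms: "\<forall>i<k. is_norm (R i)"
    and C_def: "\<forall>i<k. C i = closed_cone_of {\<Delta>. R i (\<theta> i + \<Delta>) \<le> R i (\<theta> i)}"
    and H_def: "H = {(\<Sum>i<k. \<Delta> i) | \<Delta>. (\<forall>i<k. \<Delta> i \<in> C i) \<and> (\<Sum>i<k. norm (\<Delta> i)) = 1}"
    and A_def: "A = {(\<Sum>i<k. \<Delta> i) | \<Delta>. \<forall>i<k. \<Delta> i \<in> C i} \<inter> sphere 0 1"
    and rho_pos: "\<rho> > 0"
    and coherence: "\<forall>\<Delta>. (\<forall>i<k. \<Delta> i \<in> C i) \<longrightarrow> norm (\<Sum>i<k. \<Delta> i) \<ge> \<rho> * (\<Sum>i<k. norm (\<Delta> i))"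
  shows "\<forall>(M :: 'w measure) (Z :: 'w \<Rightarrow> 'a) (\<xi>::real).
           prob_space M \<longrightarrow> Z \<in> borel_measurable M \<longrightarrow> \<xi> > 0 \<longrightarrow>
           marginal_tail (\<rho> * \<xi>) H M Z \<ge> marginal_tail \<xi> A M Z"
proof (intro allI impI)
  fix M :: "'w measure" and Z :: "'w \<Rightarrow> 'a" and \<xi> :: real
  assume P: "prob_space M" and Zm: "Z \<in> borel_measurable M" and xi: "\<xi> > 0"
  interpret prob_space M by (rule P)
  show "marginal_tail (\<rho> * \<xi>) H M Z \<ge> marginal_tail \<xi> A M Z"
    unfolding marginal_tail_def
  proof (rule INF_greatest)
    fix h assume "h \<in> H"
    then obtain \<Delta> where D: "\<forall>i<k. \<Delta> i \<in> C i" "(\<Sum>i<k. norm (\<Delta> i)) = 1"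
      and h: "h = (\<Sum>i<k. \<Delta> i)" using H_def by blast
    have nh: "norm h \<ge> \<rho>" using coherence D h by force
    hence nh0: "norm h > 0" using rho_pos by linarith
    define u where "u = (1 / norm h) *\<^sub>R h"
    have "\<forall>i<k. (1 / norm h) *\<^sub>R \<Delta> i \<in> C i"
      using D(1) C_def cone_closed_cone_of nh0 by (metis less_eq_real_def zero_le_divide_1_iff)
    moreover have "u = (\<Sum>i<k. (1 / norm h) *\<^sub>R \<Delta> i)"
      unfolding u_def h by (simp add: scaleR_sum_right)
    moreover have "norm u = 1" unfolding u_def using nh0 by simp
    ultimately have uA: "u \<in> A" unfolding A_def by auto
    have sub: "{\<omega> \<in> space M. \<xi> \<le> \<bar>Z \<omega> \<bullet> u\<bar>} \<subseteq> {\<omega> \<in> space M. \<rho> * \<xi> \<le> \<bar>Z \<omega> \<bullet> h\<bar>}"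
    proof safe
      fix \<omega> assume "\<xi> \<le> \<bar>Z \<omega> \<bullet> u\<bar>"
      moreover have "\<bar>Z \<omega> \<bullet> h\<bar> = norm h * \<bar>Z \<omega> \<bullet> u\<bar>"
        unfolding u_def using nh0 by (simp add: abs_mult)
      ultimately show "\<rho> * \<xi> \<le> \<bar>Z \<omega> \<bullet> h\<bar>"
        using nh xi rho_pos by (smt (verit, best) mult_mono)
    qed
    have meas: "{\<omega> \<in> space M. \<rho> * \<xi> \<le> \<bar>Z \<omega> \<bullet> h\<bar>} \<in> events"
      using Zm by measurable
    have "measure M {\<omega> \<in> space M. \<xi> \<le> \<bar>Z \<omega> \<bullet> u\<bar>} \<le> measure M {\<omega> \<in> space M. \<rho> * \<xi> \<le> \<bar>Z \<omega> \<bullet> h\<bar>}"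
      using finite_measure_mono[OF sub meas] .
    then show "(INF u\<in>A. ereal (measure M {\<omega> \<in> space M. \<xi> \<le> \<bar>Z \<omega> \<bullet> u\<bar>}))
        \<le> ereal (measure M {\<omega> \<in> space M. \<rho> * \<xi> \<le> \<bar>Z \<omega> \<bullet> h\<bar>})"
      by (intro INF_lower2[OF uA]) simp
  qed
qed

end
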